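(* Let $d,m \in \mathbb{N}$, $s \in \{1,\dots,d\}$, and $M := 8 \lceil m^{1/s} \rceil$. Assume that $U \subset C([0,1]^d)$ satisfies \[ u_0 + \nu \cdot \frac{\lambda}{M s} \vartheta^{(s)}_{M,y} \in U \qquad \text{for all } \nu \in \{ \pm 1 \} \text{ and } y \in [0,1]^d \] for some $\lambda > 0$ and $u_0 \in C([0,1]^d)$. Then \[ \mathrm{err}_m^{MC} (U, L^p([0,1]^d)) \geq \frac{\lambda / 2}{(64 s)^{1 + \frac{s}{p}}} \cdot m^{-\frac{1}{p} - \frac{1}{s}} \qquad \text{for all } p \in [1,\infty]. \]
   Context: Let $\varrho(x)=\max\{0,x\}$. For $M>0$, $\sigma\in\mathbb{R}$: $\Lambda_{M,\sigma}(t)=0$ if $t\le\sigma-\frac1M$, and $\Lambda_{M,\sigma}(t)=1-M|t-\sigma|$ if $t\ge\sigma-\frac1M$. For $y\in\mathbb{R}^d$, $s\in\{1,\dots,d\}$: $\vartheta^{(s)}_{M,y}(x)=\varrho\big(\sum_{i=1}^s\Lambda_{M,y_i}(x_i)-(s-1)\big)$, $x\in\mathbb{R}^d$. For $p=\infty$, $1/p=s/p=0$. Algorithms: for a Banach space $Y$ and $U\subset C([0,1]^d)\cap Y$, $A:U\to Y$ is an adaptive deterministic method using $m$ point samples if there are $f_1\in[0,1]^d$, maps $f_i:([0,1]^d)^{i-1}\times\mathbb{R}^{i-1}\to[0,1]^d$ ($2\le i\le m$) and $Q:([0,1]^d)^m\times\mathbb{R}^m\to Y$ such that for all $u\in U$,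 with $x_1=f_1$, $x_i=f_i(x_1,\dots,x_{i-1},u(x_1),\dots,u(x_{i-1}))$, $A(u)=Q(x_1,\dots,x_m,u(x_1),\dots,u(x_m))$; these form $\mathrm{Alg}_m(U,Y)$. An adaptive random method using $m$ samples on average is $(\mathbf{A},\mathbf{m})$ with $\mathbf{A}=(A_\omega)_{\omega\in\Omega}$ over a probability space $(\Omega,\mathcal{F},\mathbb{P})$, $\mathbf{m}:\Omega\to\mathbb{N}$ measurable with $\mathbb{E}[\mathbf{m}]\le m$, $\omega\mapsto A_\omega(u)$ Borel measurable for each $u\in U$, and $A_\omega\in\mathrm{Alg}_{\mathbf{m}(\omega)}(U,Y)$ for all $\omega$; these form $\mathrm{Alg}^{MC}_m(U,Y)$. Define $\mathrm{err}^{MC}_m(U,Y)=\inf_{(\mathbf{A},\mathbf{m})\in\mathrm{Alg}^{MC}_m(U,Y)}\sup_{u\in U}\mathbb{E}[\|u-A_\omega(u)\|_Y]$. *)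

theory Defs
  imports "HOL-Analysis.Analysis" "HOL-Probability.Probability"
begin

text \<open>Points of R^d are functions nat => real; coordinate i (1-based in the paper) is index i-1.
  The unit cube [0,1]^d and Lebesgue measure on it (product of Lebesgue measures on [0,1]).\<close>

definition cube :: "nat \<Rightarrow> (nat \<Rightarrow> real) set" where
  "cube d = PiE {..<d} (\<lambda>_. {0..1})"

definition cube_measure :: "nat \<Rightarrow> (nat \<Rightarrow> real) measure" where
  "cube_measure d = PiM {..<d} (\<lambda>_. restrict_space lborel {0..1::real})"

definition Ccube :: "nat \<Rightarrow> ((nat \<Rightarrow> real) \<Rightarrow> real) set" where
  "Ccube d = {u. continuous_on (cube d) u}"

definition pinv :: "ereal \<Rightarrow> real" where
  "pinv p = (if p = \<infinity> then 0 else 1 / real_of_ereal p)"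

definition Lp_space :: "nat \<Rightarrow> ereal \<Rightarrow> ((nat \<Rightarrow> real) \<Rightarrow> real) set" where
  "Lp_space d p = {f. f \<in> borel_measurable (cube_measure d) \<and>
     (if p = \<infinity> then esssup (cube_measure d) (\<lambda>x. ennreal \<bar>f x\<bar>) < \<top>
      else integrable (cube_measure d) (\<lambda>x. \<bar>f x\<bar> powr real_of_ereal p))}"

definition Lp_norm :: "nat \<Rightarrow> ereal \<Rightarrow> ((nat \<Rightarrow> real) \<Rightarrow> real) \<Rightarrow> ennreal" where
  "Lp_norm d p f = (if p = \<infinity> then esssup (cube_measure d) (\<lambda>x. ennreal \<bar>f x\<bar>)
     else ennreal ((\<integral>x. \<bar>f x\<bar> powr real_of_ereal p \<partial>cube_measure d) powr (1 / real_of_ereal p)))"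

definition Lp_borel :: "nat \<Rightarrow> ereal \<Rightarrow> ((nat \<Rightarrow> real) \<Rightarrow> real) measure" where
  "Lp_borel d p = sigma (Lp_space d p)
     {S. S \<subseteq> Lp_space d p \<and> (\<forall>f\<in>S. \<exists>e::real>0. \<forall>g\<in>Lp_space d p.
          Lp_norm d p (\<lambda>x. g x - f x) < ennreal e \<longrightarrow> g \<in> S)}"

definition Lam :: "real \<Rightarrow> real \<Rightarrow> real \<Rightarrow> real" where
  "Lam M \<sigma> t = (if t \<le> \<sigma> - 1 / M then 0 else 1 - M * \<bar>t - \<sigma>\<bar>)"

definition theta :: "nat \<Rightarrow> real \<Rightarrow> (nat \<Rightarrow> real) \<Rightarrow> (nat \<Rightarrow> real) \<Rightarrow> real" where
  "theta s M y x = max 0 ((\<Sum>i<s. Lam M (y i) (x i)) - (real s - 1))"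

fun samples :: "((nat \<Rightarrow> real) list \<Rightarrow> real list \<Rightarrow> (nat \<Rightarrow> real)) \<Rightarrow> ((nat \<Rightarrow> real) \<Rightarrow> real)
    \<Rightarrow> nat \<Rightarrow> (nat \<Rightarrow> real) list" where
  "samples f u 0 = []"
| "samples f u (Suc n) = (let xs = samples f u n in xs @ [f xs (map u xs)])"

definition Alg :: "nat \<Rightarrow> nat \<Rightarrow> ((nat \<Rightarrow> real) \<Rightarrow> real) set \<Rightarrow> ((nat \<Rightarrow> real) \<Rightarrow> real) set
    \<Rightarrow> (((nat \<Rightarrow> real) \<Rightarrow> real) \<Rightarrow> ((nat \<Rightarrow> real) \<Rightarrow> real)) set" where
  "Alg d m U Y = {A. \<exists>f Q. (\<forall>xs ys. f xs ys \<in> cube d) \<and> (\<forall>xs ys. Q xs ys \<in> Y) \<and>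
      (\<forall>u\<in>U. A u = Q (samples f u m) (map u (samples f u m)))}"

text \<open>Alg^MC_m(U, L^p): adaptive random methods using m samples on average,
  over probability spaces whose sample space lives in the type 'w.\<close>
definition Alg_MC :: "'w itself \<Rightarrow> nat \<Rightarrow> ereal \<Rightarrow> ((nat \<Rightarrow> real) \<Rightarrow> real) set \<Rightarrow> nat \<Rightarrow>
    ('w measure \<times> ('w \<Rightarrow> ((nat \<Rightarrow> real) \<Rightarrow> real) \<Rightarrow> ((nat \<Rightarrow> real) \<Rightarrow> real)) \<times> ('w \<Rightarrow> nat)) set" where
  "Alg_MC _ d p U m = {(P, A, mm). prob_space P \<and>
      mm \<in> measurable P (count_space UNIV) \<and>
      (\<integral>\<^sup>+ \<omega>. of_nat (mm \<omega>) \<partial>P) \<le> of_nat m \<and>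
      (\<forall>u\<in>U. (\<lambda>\<omega>. A \<omega> u) \<in> measurable P (Lp_borel d p)) \<and>
      (\<forall>\<omega>\<in>space P. A \<omega> \<in> Alg d (mm \<omega>) U (Lp_space d p))}"

definition err_MC :: "'w itself \<Rightarrow> nat \<Rightarrow> ereal \<Rightarrow> ((nat \<Rightarrow> real) \<Rightarrow> real) set \<Rightarrow> nat \<Rightarrow> ennreal" where
  "err_MC W d p U m = (INF (P, A, mm) \<in> Alg_MC W d p U m.
      SUP u\<in>U. \<integral>\<^sup>+ \<omega>. Lp_norm d p (\<lambda>x. u x - A \<omega> u x) \<partial>P)"

end

theory Submission
  imports Defs
begin

abbreviation I01 :: "real measure" where "I01 \<equiv> restrict_space lborel {0..1::real}"

lemma prob_I01: "prob_space I01"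
  by (rule prob_space_restrict_space) (simp_all add: emeasure_lborel_Icc)

lemma space_cube_measure: "space (cube_measure d) = cube d"
  by (simp add: cube_measure_def cube_def space_PiM space_restrict_space)

lemma prob_cube: "prob_space (cube_measure d)"
  unfolding cube_measure_def by (rule prob_space_PiM) (rule prob_I01)

lemma comp_meas: "(\<lambda>x. x i) \<in> borel_measurable (cube_measure d)"
proof (cases "i < d")
  case True
  have "(\<lambda>x. x i) \<in> measurable (cube_measure d) I01"
    unfolding cube_measure_def using True by (intro measurable_component_singleton) auto
  then have "(\<lambda>x. x i) \<in> measurable (cube_measure d) lborel"
    by (rule measurable_restrict_space2_iff[THEN iffD1, THEN conjunct1])
  then show ?thesis by simp
next
  case False
  have "\<And>w. w \<in> space (cube_measure d) \<Longrightarrow> w i = undefined"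
    using False by (auto simp add: space_cube_measure cube_def PiE_def extensional_def)
  then show ?thesis
    using measurable_cong[of "cube_measure d" "\<lambda>x. x i" "\<lambda>x. undefined" borel] by simp
qed

lemma id_meas: "(\<lambda>x. x) \<in> measurable (cube_measure d) (borel :: (nat \<Rightarrow> real) measure)"
proof (rule borel_measurableI)
  fix S :: "(nat \<Rightarrow> real) set" assume "open S"
  from product_topology_countable_basis obtain K :: "(nat \<Rightarrow> real) set set" where
    K0: "topological_basis K \<and> countable K \<and>
          (\<forall>k\<in>K. \<exists>X. (k = Pi\<^sub>E UNIV X) \<and> (\<forall>i. open (X i)) \<and> finite {i. X i \<noteq> UNIV})" ..
  have K: "topological_basis K" "countable K"
    "\<And>k. k \<in> K \<Longrightarrow> \<exists>X. (k = Pi\<^sub>E UNIV X) \<and> (\<forall>i. open (X i)) \<and> finite {i. X i \<noteq> UNIV}"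
    using K0 by simp_all
  have "\<exists>B'. B' \<subseteq> K \<and> \<Union>B' = S"
    using K(1) \<open>open S\<close> unfolding topological_basis_def by simp
  then obtain B where B: "B \<subseteq> K" "\<Union>B = S" by (elim exE conjE)
  have cB: "countable B" using B K(2) countable_subset by blast
  have k: "k \<inter> space (cube_measure d) \<in> sets (cube_measure d)" if kB: "k \<in> B" for k
  proof -
    obtain X where X: "k = Pi\<^sub>E UNIV X" "\<And>i. open (X i)" "finite {i. X i \<noteq> UNIV}"
      using K(3)[OF subsetD[OF B(1) kB]] by (elim exE conjE) simp
    have "k \<inter> space (cube_measure d) = {x \<in> space (cube_measure d). \<forall>i\<in>{i. X i \<noteq> UNIV}. x i \<in> X i}"
      unfolding X(1) by (auto simp: PiE_def Pi_def)
    also have "\<dots> \<in> sets (cube_measure d)"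
    proof (rule sets.sets_Collect_finite_All[OF _ X(3)])
      fix i
      have "(\<lambda>x. x i) -` X i \<inter> space (cube_measure d) \<in> sets (cube_measure d)"
        by (rule measurable_sets[OF comp_meas]) (simp add: X(2))
      then show "{x \<in> space (cube_measure d). x i \<in> X i} \<in> sets (cube_measure d)"
        by (simp add: vimage_def Int_def conj_commute)
    qed
    finally show ?thesis .
  qed
  have "(\<lambda>x. x) -` S \<inter> space (cube_measure d) = (\<Union>k\<in>B. k \<inter> space (cube_measure d))"
    using B(2) by auto
  also have "\<dots> \<in> sets (cube_measure d)"
    using cB k by (intro sets.countable_UN'') auto
  finally show "(\<lambda>x. x) -` S \<inter> space (cube_measure d) \<in> sets (cube_measure d)" .
qed

lemma cont_meas:
  assumes "continuous_on (cube d) u"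
  shows "u \<in> borel_measurable (cube_measure d)"
proof -
  have "(\<lambda>x. x) \<in> measurable (cube_measure d) (restrict_space borel (cube d))"
    by (rule measurable_restrict_space2[OF _ id_meas]) (simp add: space_cube_measure)
  moreover have "u \<in> borel_measurable (restrict_space borel (cube d))"
    by (rule borel_measurable_continuous_on_restrict[OF assms])
  ultimately show ?thesis using measurable_comp by fastforce
qed

lemma compact_cube: "compact (cube d)"
proof -
  define S' where "S' = (\<lambda>i::nat. if i < d then {0..1::real} else {undefined})"
  have eq: "cube d = PiE UNIV S'"
    unfolding cube_def S'_def by (auto simp: PiE_def Pi_def extensional_def)
  have "compactin (product_topology (\<lambda>i. euclidean) UNIV) (PiE UNIV S')"
    unfolding compactin_PiE by (auto simp: S'_def)
  then show ?thesis unfolding eq euclidean_product_topology by simp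
qed

lemma cont_bounded:
  fixes u :: "(nat \<Rightarrow> real) \<Rightarrow> real"
  assumes "continuous_on (cube d) u"
  obtains B where "\<And>x. x \<in> cube d \<Longrightarrow> \<bar>u x\<bar> \<le> B"
proof -
  have "compact (u ` cube d)" by (rule compact_continuous_image[OF assms compact_cube])
  then have "bounded (u ` cube d)" by (rule compact_imp_bounded)
  then obtain B where "\<And>y. y \<in> u ` cube d \<Longrightarrow> norm y \<le> B" by (auto simp: bounded_iff)
  then have "\<And>x. x \<in> cube d \<Longrightarrow> \<bar>u x\<bar> \<le> B" by auto
  then show ?thesis by (rule that)
qed

lemma powr_convex0:
  fixes q t a b :: real
  assumes q: "q \<ge> 1" and t: "0 \<le> t" "t \<le> 1" and ab: "a \<ge> 0" "b \<ge> 0"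
  shows "((1-t)*a + t*b) powr q \<le> (1-t) * a powr q + t * b powr q"
proof -
  have tq: "x powr q \<le> x" if "0 \<le> x" "x \<le> 1" for x :: real
  proof (cases "x = 0")
    case True then show ?thesis using q by simp
  next
    case False then show ?thesis using that q powr_le_one_le by simp
  qed
  consider "a > 0" "b > 0" | "a = 0" | "b = 0" using ab by linarith
  then show ?thesis
  proof cases
    case 1
    show ?thesis using convex_onD[OF powr_convex[OF q], of t a b] 1 t by simp
  next
    case 2
    have "(t*b) powr q = t powr q * b powr q" using t ab by (simp add: powr_mult)
    also have "\<dots> \<le> t * b powr q" using tq[OF t] by (intro mult_right_mono) auto
    finally show ?thesis using 2 q by simp
  next
    case 3
    have "((1-t)*a) powr q = (1-t) powr q * a powr q" using t ab by (simp add: powr_mult)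
    also have "\<dots> \<le> (1-t) * a powr q" using tq[of "1-t"] t by (intro mult_right_mono) auto
    finally show ?thesis using 3 q by simp
  qed
qed

lemma ereal_q:
  assumes "1 \<le> p" "p \<noteq> \<infinity>"
  shows "p = ereal (real_of_ereal p) \<and> 1 \<le> real_of_ereal p"
  using assms by (cases p) auto

lemma meas_abs_enn[measurable]:
  "f \<in> borel_measurable M \<Longrightarrow> (\<lambda>x. ennreal \<bar>f x\<bar>) \<in> borel_measurable M"
  by measurable

lemma Linf_char:
  "f \<in> Lp_space d \<infinity> \<longleftrightarrow> f \<in> borel_measurable (cube_measure d) \<and> (\<exists>B. AE x in cube_measure d. \<bar>f x\<bar> \<le> B)"
proof
  assume f: "f \<in> Lp_space d \<infinity>"
  then have fm: "f \<in> borel_measurable (cube_measure d)"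
    and lt: "esssup (cube_measure d) (\<lambda>x. ennreal \<bar>f x\<bar>) < \<top>" by (auto simp: Lp_space_def)
  obtain B where B: "esssup (cube_measure d) (\<lambda>x. ennreal \<bar>f x\<bar>) = ennreal B" "B \<ge> 0"
    using lt by (cases "esssup (cube_measure d) (\<lambda>x. ennreal \<bar>f x\<bar>)") auto
  have "AE x in cube_measure d. ennreal \<bar>f x\<bar> \<le> ennreal B"
    using esssup_AE[of "\<lambda>x. ennreal \<bar>f x\<bar>" "cube_measure d"] B by simp
  then have "AE x in cube_measure d. \<bar>f x\<bar> \<le> B"
    by eventually_elim (use B in \<open>simp add: ennreal_le_iff\<close>)
  then show "f \<in> borel_measurable (cube_measure d) \<and> (\<exists>B. AE x in cube_measure d. \<bar>f x\<bar> \<le> B)"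
    using fm by blast
next
  assume "f \<in> borel_measurable (cube_measure d) \<and> (\<exists>B. AE x in cube_measure d. \<bar>f x\<bar> \<le> B)"
  then obtain B where fm: "f \<in> borel_measurable (cube_measure d)" and B: "AE x in cube_measure d. \<bar>f x\<bar> \<le> B"
    by blast
  have "AE x in cube_measure d. ennreal \<bar>f x\<bar> \<le> ennreal B"
    using B by eventually_elim (simp add: ennreal_leI)
  then have "esssup (cube_measure d) (\<lambda>x. ennreal \<bar>f x\<bar>) \<le> ennreal B"
    using fm by (intro esssup_I) auto
  then have "esssup (cube_measure d) (\<lambda>x. ennreal \<bar>f x\<bar>) < \<top>"
    using ennreal_less_top le_less_trans by blast
  then show "f \<in> Lp_space d \<infinity>" using fm by (simp add: Lp_space_def)
qed

lemma Lfin_char: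
  "p \<noteq> \<infinity> \<Longrightarrow> f \<in> Lp_space d p \<longleftrightarrow> f \<in> borel_measurable (cube_measure d) \<and>
      integrable (cube_measure d) (\<lambda>x. \<bar>f x\<bar> powr real_of_ereal p)"
  by (simp add: Lp_space_def)

lemma Lp_meas: "f \<in> Lp_space d p \<Longrightarrow> f \<in> borel_measurable (cube_measure d)"
  by (simp add: Lp_space_def)

lemma powr_sum_bound:
  fixes a b K q :: real
  assumes "q \<ge> 1" "K \<ge> 0"
  shows "(K * (\<bar>a\<bar> + \<bar>b\<bar>)) powr q \<le> (2*K) powr q * (\<bar>a\<bar> powr q + \<bar>b\<bar> powr q)"
proof -
  define mx where "mx = max \<bar>a\<bar> \<bar>b\<bar>"
  have "\<bar>a\<bar> + \<bar>b\<bar> \<le> 2 * mx" by (simp add: mx_def)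
  then have "K * (\<bar>a\<bar> + \<bar>b\<bar>) \<le> K * (2 * mx)" using assms by (intro mult_left_mono) auto
  then have "(K * (\<bar>a\<bar> + \<bar>b\<bar>)) powr q \<le> ((2*K) * mx) powr q"
    using assms by (intro powr_mono2) (auto simp: mx_def)
  also have "\<dots> = (2*K) powr q * mx powr q" using assms by (simp add: powr_mult mx_def)
  also have "mx powr q \<le> \<bar>a\<bar> powr q + \<bar>b\<bar> powr q" by (simp add: mx_def max_def)
  then have "(2*K) powr q * mx powr q \<le> (2*K) powr q * (\<bar>a\<bar> powr q + \<bar>b\<bar> powr q)"
    by (intro mult_left_mono) auto
  finally show ?thesis .
qed

lemma Lp_dom:
  assumes p: "1 \<le> p" and f: "f \<in> Lp_space d p" and h: "h \<in> Lp_space d p"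
    and g: "g \<in> borel_measurable (cube_measure d)" and K: "K \<ge> 0"
    and le: "\<And>x. x \<in> cube d \<Longrightarrow> \<bar>g x\<bar> \<le> K * (\<bar>f x\<bar> + \<bar>h x\<bar>)"
  shows "g \<in> Lp_space d p"
proof (cases "p = \<infinity>")
  case True
  obtain Bf where Bf: "AE x in cube_measure d. \<bar>f x\<bar> \<le> Bf" using f True Linf_char by blast
  obtain Bh where Bh: "AE x in cube_measure d. \<bar>h x\<bar> \<le> Bh" using h True Linf_char by blast
  have le': "AE x in cube_measure d. \<bar>g x\<bar> \<le> K * (\<bar>f x\<bar> + \<bar>h x\<bar>)"
    by (rule AE_I2) (simp add: le space_cube_measure)
  have "AE x in cube_measure d. \<bar>g x\<bar> \<le> K * (Bf + Bh)"
    using Bf Bh le'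
  proof eventually_elim
    case (elim x)
    have "K * (\<bar>f x\<bar> + \<bar>h x\<bar>) \<le> K * (Bf + Bh)" using elim K by (intro mult_left_mono) auto
    then show ?case using elim by linarith
  qed
  then show ?thesis using True g Linf_char by blast
next
  case False
  define q where "q = real_of_ereal p"
  have q: "q \<ge> 1" using ereal_q[OF p False] q_def by simp
  have fi: "integrable (cube_measure d) (\<lambda>x. \<bar>f x\<bar> powr q)" using f False Lfin_char q_def by blast
  have hi: "integrable (cube_measure d) (\<lambda>x. \<bar>h x\<bar> powr q)" using h False Lfin_char q_def by blast
  have "integrable (cube_measure d) (\<lambda>x. (2*K) powr q * (\<bar>f x\<bar> powr q + \<bar>h x\<bar> powr q))"
    using fi hi by auto
  moreover have "(\<lambda>x. \<bar>g x\<bar> powr q) \<in> borel_measurable (cube_measure d)" using g by measurable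
  moreover have "AE x in cube_measure d. norm (\<bar>g x\<bar> powr q) \<le> norm ((2*K) powr q * (\<bar>f x\<bar> powr q + \<bar>h x\<bar> powr q))"
  proof (rule AE_I2)
    fix x assume "x \<in> space (cube_measure d)"
    then have x: "x \<in> cube d" by (simp add: space_cube_measure)
    have "\<bar>g x\<bar> powr q \<le> (K * (\<bar>f x\<bar> + \<bar>h x\<bar>)) powr q"
      using le[OF x] q by (intro powr_mono2) auto
    also have "\<dots> \<le> (2*K) powr q * (\<bar>f x\<bar> powr q + \<bar>h x\<bar> powr q)"
      using powr_sum_bound[OF q K] .
    finally show "norm (\<bar>g x\<bar> powr q) \<le> norm ((2*K) powr q * (\<bar>f x\<bar> powr q + \<bar>h x\<bar> powr q))"
      by simp
  qed
  ultimately have "integrable (cube_measure d) (\<lambda>x. \<bar>g x\<bar> powr q)" by (rule Bochner_Integration.integrable_bound)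
  then show ?thesis using g False Lfin_char q_def by blast
qed

lemma Lp_bounded:
  assumes p: "1 \<le> p" and g: "g \<in> borel_measurable (cube_measure d)"
    and le: "\<And>x. x \<in> cube d \<Longrightarrow> \<bar>g x\<bar> \<le> B"
  shows "g \<in> Lp_space d p"
proof -
  interpret prob_space "cube_measure d" by (rule prob_cube)
  have B: "AE x in cube_measure d. \<bar>g x\<bar> \<le> B"
    by (rule AE_I2) (simp add: le space_cube_measure)
  show ?thesis
  proof (cases "p = \<infinity>")
    case True
    then show ?thesis using B g Linf_char by blast
  next
    case False
    define q where "q = real_of_ereal p"
    have q: "q \<ge> 1" using ereal_q[OF p False] q_def by simp
    have "AE x in cube_measure d. norm (\<bar>g x\<bar> powr q) \<le> B powr q"
      using B by eventually_elim (use q in \<open>auto intro!: powr_mono2\<close>)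
    moreover have "(\<lambda>x. \<bar>g x\<bar> powr q) \<in> borel_measurable (cube_measure d)" using g by measurable
    ultimately have "integrable (cube_measure d) (\<lambda>x. \<bar>g x\<bar> powr q)"
      by (rule integrable_const_bound)
    then show ?thesis using g False Lfin_char q_def by blast
  qed
qed

lemma Lp_add:
  assumes "1 \<le> p" "f \<in> Lp_space d p" "h \<in> Lp_space d p"
  shows "(\<lambda>x. f x + h x) \<in> Lp_space d p"
  by (rule Lp_dom[where K=1 and f=f and h=h, OF assms])
    (simp_all add: borel_measurable_add[OF Lp_meas[OF assms(2)] Lp_meas[OF assms(3)]] abs_triangle_ineq)

lemma Lp_diff:
  assumes "1 \<le> p" "f \<in> Lp_space d p" "h \<in> Lp_space d p"
  shows "(\<lambda>x. f x - h x) \<in> Lp_space d p"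
  by (rule Lp_dom[where K=1 and f=f and h=h, OF assms])
    (simp_all add: borel_measurable_diff[OF Lp_meas[OF assms(2)] Lp_meas[OF assms(3)]] abs_triangle_ineq4)

lemma Lp_cmult:
  assumes "1 \<le> p" "f \<in> Lp_space d p"
  shows "(\<lambda>x. c * f x) \<in> Lp_space d p"
  by (rule Lp_dom[where K="\<bar>c\<bar>" and f=f and h=f, OF assms assms(2)])
    (simp_all add: borel_measurable_times[OF borel_measurable_const Lp_meas[OF assms(2)]] abs_mult)

lemma Lp_tri_fin:
  fixes q :: real
  assumes q: "q \<ge> 1"
    and fm: "f \<in> borel_measurable M" and gm: "g \<in> borel_measurable M"
    and fi: "integrable M (\<lambda>x. \<bar>f x\<bar> powr q)" and gi: "integrable M (\<lambda>x. \<bar>g x\<bar> powr q)"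
    and fgi: "integrable M (\<lambda>x. \<bar>f x + g x\<bar> powr q)"
  shows "(\<integral>x. \<bar>f x + g x\<bar> powr q \<partial>M) powr (1/q) \<le>
         (\<integral>x. \<bar>f x\<bar> powr q \<partial>M) powr (1/q) + (\<integral>x. \<bar>g x\<bar> powr q \<partial>M) powr (1/q)"
proof -
  define If where "If = (\<integral>x. \<bar>f x\<bar> powr q \<partial>M)"
  define Ig where "Ig = (\<integral>x. \<bar>g x\<bar> powr q \<partial>M)"
  define Ifg where "Ifg = (\<integral>x. \<bar>f x + g x\<bar> powr q \<partial>M)"
  have If0: "If \<ge> 0" unfolding If_def by (rule integral_nonneg_AE) auto
  have Ig0: "Ig \<ge> 0" unfolding Ig_def by (rule integral_nonneg_AE) auto
  have Ifg0: "Ifg \<ge> 0" unfolding Ifg_def by (rule integral_nonneg_AE) auto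
  have pw: "(x powr (1/q)) powr q = x" if "x \<ge> 0" for x :: real
    using that q by (simp add: powr_powr)
  show ?thesis unfolding If_def[symmetric] Ig_def[symmetric] Ifg_def[symmetric]
  proof (rule field_le_epsilon)
    fix e :: real assume e: "0 < e"
    define A where "A = If powr (1/q) + e/2"
    define B where "B = Ig powr (1/q) + e/2"
    have A: "A > 0" "If \<le> A powr q"
    proof -
      show "A > 0" using e by (simp add: A_def add_nonneg_pos)
      have "If = (If powr (1/q)) powr q" using pw If0 by simp
      also have "\<dots> \<le> A powr q" using q e by (intro powr_mono2) (auto simp: A_def)
      finally show "If \<le> A powr q" .
    qed
    have B: "B > 0" "Ig \<le> B powr q"
    proof -
      show "B > 0" using e by (simp add: B_def add_nonneg_pos)
      have "Ig = (Ig powr (1/q)) powr q" using pw Ig0 by simp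
      also have "\<dots> \<le> B powr q" using q e by (intro powr_mono2) (auto simp: B_def)
      finally show "Ig \<le> B powr q" .
    qed
    define t where "t = B / (A + B)"
    have t: "0 \<le> t" "t \<le> 1" "1 - t = A / (A + B)" using A B by (auto simp: t_def field_simps)
    define c1 where "c1 = (A + B) powr q * ((1 - t) / A powr q)"
    define c2 where "c2 = (A + B) powr q * (t / B powr q)"
    have pt: "\<bar>f x + g x\<bar> powr q \<le> c1 * \<bar>f x\<bar> powr q + c2 * \<bar>g x\<bar> powr q" for x
    proof -
      have eq: "\<bar>f x\<bar> + \<bar>g x\<bar> = (A + B) * ((1 - t) * (\<bar>f x\<bar> / A) + t * (\<bar>g x\<bar> / B))"
        unfolding t(3) t_def using A B by (simp add: divide_simps)
      have "\<bar>f x + g x\<bar> powr q \<le> (\<bar>f x\<bar> + \<bar>g x\<bar>) powr q"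
        using q by (intro powr_mono2) auto
      also have "\<dots> = (A + B) powr q * ((1 - t) * (\<bar>f x\<bar> / A) + t * (\<bar>g x\<bar> / B)) powr q"
        unfolding eq using A B t by (subst powr_mult) auto
      also have "\<dots> \<le> (A + B) powr q * ((1 - t) * (\<bar>f x\<bar> / A) powr q + t * (\<bar>g x\<bar> / B) powr q)"
        using A B t q by (intro mult_left_mono powr_convex0) auto
      also have "\<dots> = c1 * \<bar>f x\<bar> powr q + c2 * \<bar>g x\<bar> powr q"
        using A B by (simp add: c1_def c2_def powr_divide field_simps)
      finally show ?thesis .
    qed
    have "Ifg \<le> (\<integral>x. c1 * \<bar>f x\<bar> powr q + c2 * \<bar>g x\<bar> powr q \<partial>M)"
      unfolding Ifg_def using fgi fi gi pt by (intro integral_mono) auto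
    also have "\<dots> = c1 * If + c2 * Ig"
      using fi gi by (simp add: If_def Ig_def)
    also have "\<dots> \<le> c1 * A powr q + c2 * B powr q"
      using A B t by (intro add_mono mult_left_mono) (auto simp: c1_def c2_def)
    also have "\<dots> = (A + B) powr q"
      using A B t by (simp add: c1_def c2_def field_simps)
    finally have "Ifg \<le> (A + B) powr q" .
    then have "Ifg powr (1/q) \<le> ((A + B) powr q) powr (1/q)"
      using Ifg0 q by (intro powr_mono2) auto
    also have "\<dots> = A + B" using A B q by (simp add: powr_powr)
    finally show "Ifg powr (1/q) \<le> If powr (1/q) + Ig powr (1/q) + e"
      by (simp add: A_def B_def)
  qed
qed

lemma Lp_tri:
  assumes p: "1 \<le> p" and f: "f \<in> Lp_space d p" and g: "g \<in> Lp_space d p"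
  shows "Lp_norm d p (\<lambda>x. f x + g x) \<le> Lp_norm d p f + Lp_norm d p g"
proof (cases "p = \<infinity>")
  case True
  have fm: "f \<in> borel_measurable (cube_measure d)" and gm: "g \<in> borel_measurable (cube_measure d)"
    using f g by (simp_all add: Lp_meas)
  let ?Ef = "esssup (cube_measure d) (\<lambda>x. ennreal \<bar>f x\<bar>)"
  let ?Eg = "esssup (cube_measure d) (\<lambda>x. ennreal \<bar>g x\<bar>)"
  have "AE x in cube_measure d. ennreal \<bar>f x + g x\<bar> \<le> ?Ef + ?Eg"
    using esssup_AE[of "\<lambda>x. ennreal \<bar>f x\<bar>" "cube_measure d"] esssup_AE[of "\<lambda>x. ennreal \<bar>g x\<bar>" "cube_measure d"]
  proof eventually_elim
    case (elim x)
    have "ennreal \<bar>f x + g x\<bar> \<le> ennreal (\<bar>f x\<bar> + \<bar>g x\<bar>)" by (intro ennreal_leI) simp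
    also have "\<dots> = ennreal \<bar>f x\<bar> + ennreal \<bar>g x\<bar>" by (simp add: ennreal_plus)
    also have "\<dots> \<le> ?Ef + ?Eg" using elim by (intro add_mono) auto
    finally show ?case .
  qed
  moreover have "(\<lambda>x. ennreal \<bar>f x + g x\<bar>) \<in> borel_measurable (cube_measure d)"
    by (intro meas_abs_enn borel_measurable_add fm gm)
  ultimately have "esssup (cube_measure d) (\<lambda>x. ennreal \<bar>f x + g x\<bar>) \<le> ?Ef + ?Eg"
    by (intro esssup_I)
  then show ?thesis using True by (simp add: Lp_norm_def)
next
  case False
  define q where "q = real_of_ereal p"
  have q: "q \<ge> 1" using ereal_q[OF p False] q_def by simp
  have fg: "(\<lambda>x. f x + g x) \<in> Lp_space d p" by (rule Lp_add[OF p f g])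
  have "(\<integral>x. \<bar>f x + g x\<bar> powr q \<partial>cube_measure d) powr (1/q) \<le>
         (\<integral>x. \<bar>f x\<bar> powr q \<partial>cube_measure d) powr (1/q) + (\<integral>x. \<bar>g x\<bar> powr q \<partial>cube_measure d) powr (1/q)"
    using f g fg False q_def by (intro Lp_tri_fin[OF q]) (simp_all add: Lfin_char Lp_meas)
  then have "ennreal ((\<integral>x. \<bar>f x + g x\<bar> powr q \<partial>cube_measure d) powr (1/q)) \<le>
         ennreal ((\<integral>x. \<bar>f x\<bar> powr q \<partial>cube_measure d) powr (1/q) + (\<integral>x. \<bar>g x\<bar> powr q \<partial>cube_measure d) powr (1/q))"
    by (rule ennreal_leI)
  also have "\<dots> = ennreal ((\<integral>x. \<bar>f x\<bar> powr q \<partial>cube_measure d) powr (1/q)) + ennreal ((\<integral>x. \<bar>g x\<bar> powr q \<partial>cube_measure d) powr (1/q))"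
    by (rule ennreal_plus) simp_all
  finally have "ennreal ((\<integral>x. \<bar>f x + g x\<bar> powr q \<partial>cube_measure d) powr (1/q)) \<le>
         ennreal ((\<integral>x. \<bar>f x\<bar> powr q \<partial>cube_measure d) powr (1/q)) + ennreal ((\<integral>x. \<bar>g x\<bar> powr q \<partial>cube_measure d) powr (1/q))" .
  then show ?thesis using False
    by (simp add: Lp_norm_def q_def[symmetric])
qed

lemma Lp_norm_sym: "Lp_norm d p (\<lambda>x. f x - g x) = Lp_norm d p (\<lambda>x. g x - f x)"
  by (simp add: Lp_norm_def abs_minus_commute)

lemma Lp_norm_fin: "Lp_space d p \<noteq> {} \<Longrightarrow> f \<in> Lp_space d p \<Longrightarrow> Lp_norm d p f < \<top>"
  by (auto simp: Lp_norm_def Lp_space_def)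

lemma space_Lp_borel: "space (Lp_borel d p) = Lp_space d p"
  unfolding Lp_borel_def by (rule space_measure_of) auto

lemma sets_Lp_borel_open:
  assumes "S \<subseteq> Lp_space d p"
    and "\<And>f. f \<in> S \<Longrightarrow> \<exists>e::real>0. \<forall>g\<in>Lp_space d p. Lp_norm d p (\<lambda>x. g x - f x) < ennreal e \<longrightarrow> g \<in> S"
  shows "S \<in> sets (Lp_borel d p)"
proof -
  have "S \<in> {S. S \<subseteq> Lp_space d p \<and> (\<forall>f\<in>S. \<exists>e::real>0. \<forall>g\<in>Lp_space d p.
          Lp_norm d p (\<lambda>x. g x - f x) < ennreal e \<longrightarrow> g \<in> S)}"
    using assms by blast
  then show ?thesis unfolding Lp_borel_def
    by (subst sets_measure_of) (auto intro: sigma_sets.Basic)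
qed

lemma norm_meas:
  assumes p: "1 \<le> p" and u: "u \<in> Lp_space d p"
  shows "(\<lambda>g. Lp_norm d p (\<lambda>x. u x - g x)) \<in> borel_measurable (Lp_borel d p)"
proof (rule borel_measurableI_less)
  fix a :: ennreal
  show "{g \<in> space (Lp_borel d p). Lp_norm d p (\<lambda>x. u x - g x) < a} \<in> sets (Lp_borel d p)"
    unfolding space_Lp_borel
  proof (rule sets_Lp_borel_open)
    fix f assume "f \<in> {g \<in> Lp_space d p. Lp_norm d p (\<lambda>x. u x - g x) < a}"
    then have f: "f \<in> Lp_space d p" and lt: "Lp_norm d p (\<lambda>x. u x - f x) < a" by auto
    obtain r where r: "Lp_norm d p (\<lambda>x. u x - f x) = ennreal r" "r \<ge> 0"
      using Lp_norm_fin[OF _ Lp_diff[OF p u f]] f by (cases "Lp_norm d p (\<lambda>x. u x - f x)") auto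
    obtain e :: real where e: "e > 0" "ennreal r + ennreal e < a"
    proof (cases a)
      case (real b)
      then have "r < b" using lt r by (simp add: ennreal_less_iff)
      then have "r + (b - r)/2 < b" by (simp add: field_simps)
      then show ?thesis using that[of "(b - r)/2"] r real \<open>r < b\<close>
        by (simp add: ennreal_plus[symmetric] ennreal_less_iff del: ennreal_plus)
    next
      case top
      then show ?thesis using that[of 1] by (simp add: ennreal_plus[symmetric] del: ennreal_plus)
    qed
    show "\<exists>e::real>0. \<forall>g\<in>Lp_space d p. Lp_norm d p (\<lambda>x. g x - f x) < ennreal e \<longrightarrow>
            g \<in> {g \<in> Lp_space d p. Lp_norm d p (\<lambda>x. u x - g x) < a}"
    proof (intro exI[of _ e] conjI ballI impI)
      fix g assume g: "g \<in> Lp_space d p" and ge: "Lp_norm d p (\<lambda>x. g x - f x) < ennreal e"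
      have "Lp_norm d p (\<lambda>x. u x - g x) = Lp_norm d p (\<lambda>x. (u x - f x) + (f x - g x))" by simp
      also have "\<dots> \<le> Lp_norm d p (\<lambda>x. u x - f x) + Lp_norm d p (\<lambda>x. f x - g x)"
        by (rule Lp_tri[OF p Lp_diff[OF p u f] Lp_diff[OF p f g]])
      also have "\<dots> < ennreal r + ennreal e"
        using ge r by (simp add: Lp_norm_sym[of d p f g] ennreal_add_left_cancel_less)
      also have "\<dots> < a" by (rule e(2))
      finally show "g \<in> {g \<in> Lp_space d p. Lp_norm d p (\<lambda>x. u x - g x) < a}" using g by simp
    qed (use e in simp)
  qed auto
qed

lemma Lam_le1: "M > 0 \<Longrightarrow> Lam M \<sigma> t \<le> 1"
  by (simp add: Lam_def)

lemma theta_nonneg: "theta s M y x \<ge> 0"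
  by (simp add: theta_def)

lemma theta_le1:
  assumes "M > 0" shows "theta s M y x \<le> 1"
proof -
  have "(\<Sum>i<s. Lam M (y i) (x i)) \<le> (\<Sum>i<s. 1)"
    by (intro sum_mono Lam_le1 assms)
  then show ?thesis by (simp add: theta_def)
qed

lemma theta_pos:
  assumes M: "M > 0" and ne: "theta s M y x \<noteq> 0" and i: "i < s"
  shows "\<bar>x i - y i\<bar> < 1 / M"
proof -
  have pos: "(\<Sum>j<s. Lam M (y j) (x j)) - (real s - 1) > 0"
    using ne by (simp add: theta_def max_def split: if_splits)
  have Li: "Lam M (y i) (x i) > 0"
  proof (rule ccontr)
    assume "\<not> ?thesis"
    then have le0: "Lam M (y i) (x i) \<le> 0" by simp
    have "(\<Sum>j<s. Lam M (y j) (x j)) = Lam M (y i) (x i) + (\<Sum>j\<in>{..<s} - {i}. Lam M (y j) (x j))"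
      using i by (subst sum.remove[of _ i]) auto
    also have "(\<Sum>j\<in>{..<s} - {i}. Lam M (y j) (x j)) \<le> (\<Sum>j\<in>{..<s} - {i}. 1)"
      by (intro sum_mono Lam_le1 M)
    also have "(\<Sum>j\<in>{..<s} - {i}. (1::real)) = real s - 1"
      using i by simp
    finally show False using pos le0 by linarith
  qed
  then have "\<not> x i \<le> y i - 1 / M" and "1 - M * \<bar>x i - y i\<bar> > 0"
    by (auto simp: Lam_def split: if_splits)
  then have "M * \<bar>x i - y i\<bar> < 1" by linarith
  then show ?thesis using M by (simp add: field_simps)
qed

lemma theta_half:
  assumes M: "M > 0" and s: "s \<ge> 1" and near: "\<And>i. i < s \<Longrightarrow> \<bar>x i - y i\<bar> \<le> 1 / (2 * M * s)"
  shows "theta s M y x \<ge> 1/2"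
proof -
  have each: "Lam M (y i) (x i) \<ge> 1 - 1 / (2 * s)" if i: "i < s" for i
  proof -
    have r: "1 / (2 * M * s) < 1 / M" using M s by (simp add: field_simps)
    have n: "\<bar>x i - y i\<bar> \<le> 1 / (2 * M * s)" by (rule near[OF i])
    then have "\<not> x i \<le> y i - 1 / M" using r by linarith
    then have "Lam M (y i) (x i) = 1 - M * \<bar>x i - y i\<bar>" by (simp add: Lam_def)
    also have "M * \<bar>x i - y i\<bar> \<le> M * (1 / (2 * M * s))" using n M by (intro mult_left_mono) auto
    then have "1 - M * \<bar>x i - y i\<bar> \<ge> 1 - 1 / (2 * s)" using M by (simp add: field_simps)
    finally show ?thesis by simp
  qed
  have "(\<Sum>i<s. Lam M (y i) (x i)) \<ge> (\<Sum>i<s. 1 - 1 / (2 * real s))"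
    using each by (intro sum_mono) auto
  also have "(\<Sum>i<s. 1 - 1 / (2 * real s)) = real s - 1/2"
    using s by (simp add: field_simps)
  finally show ?thesis by (simp add: theta_def)
qed

lemma theta_meas: "theta s M y \<in> borel_measurable (cube_measure d)"
proof -
  have [measurable]: "(\<lambda>x. x i) \<in> borel_measurable (cube_measure d)" for i by (rule comp_meas)
  show ?thesis unfolding theta_def[abs_def] Lam_def by measurable
qed

lemma sigma_I01: "sigma_finite_measure I01"
proof -
  interpret prob_space I01 by (rule prob_I01)
  show ?thesis by unfold_locales
qed

interpretation I01P: product_sigma_finite "\<lambda>_::nat. I01"
  unfolding product_sigma_finite_def using sigma_I01 by simp

lemma sets_I01: "0 \<le> a \<Longrightarrow> b \<le> 1 \<Longrightarrow> {a..b} \<in> sets I01"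
  by (subst sets_restrict_space_iff) auto

lemma emeasure_I01: "0 \<le> a \<Longrightarrow> a \<le> b \<Longrightarrow> b \<le> 1 \<Longrightarrow> emeasure I01 {a..b} = ennreal (b - a)"
  by (subst emeasure_restrict_space) (auto simp: emeasure_lborel_Icc)

lemma box_props:
  fixes lo hi :: "nat \<Rightarrow> real"
  assumes lh: "\<And>i. i < s \<Longrightarrow> 0 \<le> lo i \<and> lo i \<le> hi i \<and> hi i \<le> 1" and sd: "s \<le> d"
  defines "Sb \<equiv> PiE {..<d} (\<lambda>i. if i < s then {lo i..hi i} else {0..1})"
  shows "Sb \<in> sets (cube_measure d)" "Sb \<subseteq> cube d"
    "measure (cube_measure d) Sb = (\<Prod>i<s. hi i - lo i)"
proof -
  have A: "(if i < s then {lo i..hi i} else {0..1}) \<in> sets I01" for i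
    using lh[of i] by (auto intro!: sets_I01)
  show "Sb \<in> sets (cube_measure d)"
    unfolding Sb_def cube_measure_def by (rule sets_PiM_I_finite) (use A in auto)
  show "Sb \<subseteq> cube d"
    unfolding Sb_def cube_def using lh by (intro PiE_mono) auto
  have "emeasure (cube_measure d) Sb = (\<Prod>i<d. emeasure I01 (if i < s then {lo i..hi i} else {0..1}))"
    unfolding Sb_def cube_measure_def by (rule I01P.emeasure_PiM) (use A in auto)
  also have "\<dots> = (\<Prod>i<d. ennreal (if i < s then hi i - lo i else 1))"
    using lh by (intro prod.cong refl) (auto simp: emeasure_I01)
  also have "\<dots> = ennreal (\<Prod>i<d. (if i < s then hi i - lo i else 1))"
    using lh by (intro prod_ennreal) auto
  also have "(\<Prod>i<d. (if i < s then hi i - lo i else 1)) = (\<Prod>i<s. (if i < s then hi i - lo i else 1))"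
    using sd by (intro prod.mono_neutral_right) auto
  also have "\<dots> = (\<Prod>i<s. hi i - lo i)" by simp
  finally have "emeasure (cube_measure d) Sb = ennreal (\<Prod>i<s. hi i - lo i)" .
  moreover have "0 \<le> (\<Prod>i<s. hi i - lo i)" by (rule prod_nonneg) (use lh in auto)
  ultimately show "measure (cube_measure d) Sb = (\<Prod>i<s. hi i - lo i)"
    by (simp add: measure_def)
qed

lemma norm_lower:
  assumes p: "1 \<le> p" and h: "h \<in> Lp_space d p" and S: "S \<in> sets (cube_measure d)"
    and Spos: "measure (cube_measure d) S > 0" and t: "t \<ge> 0"
    and ht: "\<And>x. x \<in> S \<Longrightarrow> t \<le> \<bar>h x\<bar>"
  shows "ennreal (t * measure (cube_measure d) S powr pinv p) \<le> Lp_norm d p h"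
proof -
  interpret prob_space "cube_measure d" by (rule prob_cube)
  show ?thesis
  proof (cases "p = \<infinity>")
    case True
    have hm: "h \<in> borel_measurable (cube_measure d)" using h by (rule Lp_meas)
    let ?E = "esssup (cube_measure d) (\<lambda>x. ennreal \<bar>h x\<bar>)"
    have "ennreal t \<le> ?E"
    proof (rule ccontr)
      assume "\<not> ennreal t \<le> ?E"
      then have lt: "?E < ennreal t" by simp
      have "AE x in cube_measure d. x \<notin> S"
        using esssup_AE[of "\<lambda>x. ennreal \<bar>h x\<bar>" "cube_measure d"]
      proof eventually_elim
        case (elim x)
        show ?case
        proof
          assume "x \<in> S"
          then have "ennreal t \<le> ennreal \<bar>h x\<bar>" using ht by (intro ennreal_leI) auto
          then have "ennreal t \<le> ?E" using elim order.trans by blast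
          then show False using lt by simp
        qed
      qed
      then have "emeasure (cube_measure d) S = 0"
        using S by (subst (asm) AE_iff_measurable[OF S]) (auto dest: sets.sets_into_space)
      then show False using Spos by (simp add: measure_def)
    qed
    then show ?thesis using True Spos by (simp add: Lp_norm_def pinv_def)
  next
    case False
    define q where "q = real_of_ereal p"
    have q: "q \<ge> 1" using ereal_q[OF p False] q_def by simp
    have hi: "integrable (cube_measure d) (\<lambda>x. \<bar>h x\<bar> powr q)" using h False Lfin_char q_def by blast
    have "(\<integral>x. indicator S x * t powr q \<partial>cube_measure d) \<le> (\<integral>x. \<bar>h x\<bar> powr q \<partial>cube_measure d)"
    proof (rule integral_mono)
      show "integrable (cube_measure d) (\<lambda>x. indicator S x * t powr q)"
        using S by (intro integrable_mult_left integrable_real_indicator) (auto simp: emeasure_eq_measure)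
      show "integrable (cube_measure d) (\<lambda>x. \<bar>h x\<bar> powr q)" by (rule hi)
      fix x
      show "indicator S x * t powr q \<le> \<bar>h x\<bar> powr q"
        using ht[of x] t q by (cases "x \<in> S") (auto intro!: powr_mono2)
    qed
    also have "(\<integral>x. indicator S x * t powr q \<partial>cube_measure d) = measure (cube_measure d) S * t powr q"
      using S by simp
    finally have le: "measure (cube_measure d) S * t powr q \<le> (\<integral>x. \<bar>h x\<bar> powr q \<partial>cube_measure d)" .
    have "t * measure (cube_measure d) S powr (1/q) = (measure (cube_measure d) S * t powr q) powr (1/q)"
      using t q by (simp add: powr_mult powr_powr)
    also have "\<dots> \<le> (\<integral>x. \<bar>h x\<bar> powr q \<partial>cube_measure d) powr (1/q)"
      using le q t by (intro powr_mono2) auto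
    finally show ?thesis using False
      by (simp add: Lp_norm_def pinv_def q_def[symmetric] ennreal_leI)
  qed
qed

definition yc :: "nat \<Rightarrow> nat \<Rightarrow> real \<Rightarrow> (nat \<Rightarrow> nat) \<Rightarrow> (nat \<Rightarrow> real)" where
  "yc s d M a = (\<lambda>i. if i < s then (2 * real (a i) + 1) / M else if i < d then 1/2 else undefined)"

definition Jset :: "nat \<Rightarrow> nat \<Rightarrow> (nat \<Rightarrow> nat) set" where
  "Jset s L = PiE {..<s} (\<lambda>_. {..<L})"

lemma yc_range:
  assumes M: "M = 2 * real L" and a: "a \<in> Jset s L" and i: "i < s"
  shows "1 / M \<le> yc s d M a i" "yc s d M a i \<le> 1 - 1 / M"
proof -
  have ai: "a i < L" using a i by (auto simp: Jset_def)
  then have L: "L \<ge> 1" by simp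
  have Mpos: "M > 0" using M L by simp
  show "1 / M \<le> yc s d M a i" using i Mpos by (simp add: yc_def divide_right_mono)
  have "2 * real (a i) + 1 \<le> M - 1" using ai M by linarith
  then have "(2 * real (a i) + 1) / M \<le> (M - 1) / M" using Mpos by (intro divide_right_mono) auto
  also have "(M - 1) / M = 1 - 1 / M" using Mpos by (simp add: field_simps)
  finally show "yc s d M a i \<le> 1 - 1 / M" using i by (simp add: yc_def)
qed

lemma yc_cube:
  assumes M: "M = 2 * real L" and a: "a \<in> Jset s L" and sd: "s \<le> d"
  shows "yc s d M a \<in> cube d"
proof -
  have "yc s d M a i \<in> {0..1}" if "i < d" for i
  proof (cases "i < s")
    case True
    have "a i < L" using a True by (auto simp: Jset_def)
    then have "M > 0" using M by simp
    then have "0 < 1 / M" by simp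
    moreover have "1 / M \<le> yc s d M a i" "yc s d M a i \<le> 1 - 1 / M"
      using yc_range[OF M a True] by auto
    ultimately have "0 \<le> yc s d M a i" "yc s d M a i \<le> 1" by linarith+
    then show ?thesis by simp
  next
    case False
    then show ?thesis using that by (simp add: yc_def)
  qed
  moreover have "yc s d M a i = undefined" if "\<not> i < d" for i
    using that sd by (simp add: yc_def)
  ultimately show ?thesis unfolding cube_def PiE_iff extensional_def by simp
qed

lemma yc_disj:
  assumes M: "M > 0" and a: "a \<in> Jset s L" and b: "b \<in> Jset s L"
    and ta: "theta s M (yc s d M a) x \<noteq> 0" and tb: "theta s M (yc s d M b) x \<noteq> 0"
  shows "a = b"
proof
  fix i
  show "a i = b i"
  proof (cases "i < s")
    case True
    have "\<bar>x i - yc s d M a i\<bar> < 1 / M" by (rule theta_pos[OF M ta True])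
    moreover have "\<bar>x i - yc s d M b i\<bar> < 1 / M" by (rule theta_pos[OF M tb True])
    ultimately have "M * \<bar>x i - yc s d M a i\<bar> < 1" "M * \<bar>x i - yc s d M b i\<bar> < 1"
      using M by (simp_all add: field_simps)
    then have h: "\<bar>M * x i - M * yc s d M a i\<bar> < 1" "\<bar>M * x i - M * yc s d M b i\<bar> < 1"
      using M by (simp_all add: abs_mult right_diff_distrib[symmetric])
    have "M * yc s d M a i = 2 * real (a i) + 1" "M * yc s d M b i = 2 * real (b i) + 1"
      using True M by (simp_all add: yc_def)
    then have "real (a i) < real (b i) + 1" "real (b i) < real (a i) + 1" using h by linarith+
    then have "a i < b i + 1" "b i < a i + 1" by linarith+
    then show ?thesis by linarith
  next
    case False
    then have "a i = undefined" "b i = undefined" using a b by (simp_all add: Jset_def PiE_iff extensional_def)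
    then show ?thesis by simp
  qed
qed

lemma card_Jset: "card (Jset s L) = L ^ s"
  by (simp add: Jset_def card_PiE)

lemma finite_Jset: "finite (Jset s L)"
  by (simp add: Jset_def finite_PiE)

lemma count_bad:
  assumes M: "M > 0"
  shows "card {a \<in> Jset s L. \<exists>x\<in>set xs. theta s M (yc s d M a) x \<noteq> 0} \<le> length xs"
proof -
  have eq: "{a \<in> Jset s L. \<exists>x\<in>set xs. theta s M (yc s d M a) x \<noteq> 0} =
        (\<Union>x\<in>set xs. {a \<in> Jset s L. theta s M (yc s d M a) x \<noteq> 0})" by auto
  have c1: "card {a \<in> Jset s L. theta s M (yc s d M a) x \<noteq> 0} \<le> 1" for x
  proof -
    have fin: "finite {a \<in> Jset s L. theta s M (yc s d M a) x \<noteq> 0}" using finite_Jset by simp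
    have "card {a \<in> Jset s L. theta s M (yc s d M a) x \<noteq> 0} \<le> Suc 0"
      using yc_disj[OF M] by (subst card_le_Suc0_iff_eq[OF fin]) blast
    then show ?thesis by simp
  qed
  have "card (\<Union>x\<in>set xs. {a \<in> Jset s L. theta s M (yc s d M a) x \<noteq> 0})
        \<le> (\<Sum>x\<in>set xs. card {a \<in> Jset s L. theta s M (yc s d M a) x \<noteq> 0})"
    by (rule card_UN_le) simp
  also have "\<dots> \<le> (\<Sum>x\<in>set xs. 1)" by (intro sum_mono c1)
  also have "\<dots> = card (set xs)" by simp
  also have "\<dots> \<le> length xs" by (rule card_length)
  finally show ?thesis unfolding eq .
qed

lemma theta_Lp:
  assumes p: "1 \<le> p" and M: "M > 0"
  shows "theta s M y \<in> Lp_space d p"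
  by (rule Lp_bounded[OF p theta_meas, where B=1]) (use theta_nonneg theta_le1[OF M] in auto)

lemma pair_bound:
  assumes p: "1 \<le> p" and M: "M = 2 * real L" and a: "a \<in> Jset s L" and s: "1 \<le> s" and sd: "s \<le> d"
    and u0: "u0 \<in> Lp_space d p" and g: "g \<in> Lp_space d p" and c: "c > 0"
    and up: "\<And>x. up x = u0 x + c * theta s M (yc s d M a) x"
    and um: "\<And>x. um x = u0 x - c * theta s M (yc s d M a) x"
  shows "ennreal (c * ((1 / (M * s)) ^ s) powr pinv p) \<le>
           Lp_norm d p (\<lambda>x. up x - g x) + Lp_norm d p (\<lambda>x. um x - g x)"
proof -
  define y where "y = yc s d M a"
  define r where "r = 1 / (2 * M * s)"
  have "a 0 < L" using a s by (simp add: Jset_def PiE_iff)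
  then have L: "L \<ge> 1" by simp
  have Mpos: "M > 0" using M L by simp
  have r0: "r > 0" using Mpos s by (simp add: r_def)
  have rM: "r \<le> 1 / M" using Mpos s by (simp add: r_def field_simps)
  have yr: "1 / M \<le> y i" "y i \<le> 1 - 1 / M" if "i < s" for i
    using yc_range[OF M a that] by (auto simp: y_def)
  define lo where "lo = (\<lambda>i. y i - r)"
  define hi where "hi = (\<lambda>i. y i + r)"
  have lh: "0 \<le> lo i \<and> lo i \<le> hi i \<and> hi i \<le> 1" if "i < s" for i
    using yr[OF that] rM r0 by (auto simp: lo_def hi_def)
  define Sb where "Sb = PiE {..<d} (\<lambda>i. if i < s then {lo i..hi i} else {0..1})"
  have Sb: "Sb \<in> sets (cube_measure d)" "Sb \<subseteq> cube d" "measure (cube_measure d) Sb = (\<Prod>i<s. hi i - lo i)"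
    unfolding Sb_def by (rule box_props[OF lh sd], assumption)+
  have "(\<Prod>i<s. hi i - lo i) = (\<Prod>i<s. 2 * r)" by (simp add: lo_def hi_def)
  also have "\<dots> = (1 / (M * s)) ^ s" using Mpos s by (simp add: r_def)
  finally have mS: "measure (cube_measure d) Sb = (1 / (M * s)) ^ s" using Sb(3) by simp
  have mSpos: "measure (cube_measure d) Sb > 0" using mS Mpos s by simp
  have th: "theta s M y x \<ge> 1/2" if x: "x \<in> Sb" for x
  proof (rule theta_half[OF Mpos s])
    fix i assume i: "i < s"
    then have "i \<in> {..<d}" using sd by simp
    then have "x i \<in> (if i < s then {lo i..hi i} else {0..1})" using x by (simp add: Sb_def PiE_iff)
    then have "x i \<in> {lo i..hi i}" using i by simp
    then show "\<bar>x i - y i\<bar> \<le> 1 / (2 * M * real s)" by (auto simp: lo_def hi_def r_def)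
  qed
  have thL: "theta s M y \<in> Lp_space d p" by (rule theta_Lp[OF p Mpos])
  have upL: "up \<in> Lp_space d p"
  proof -
    have "up = (\<lambda>x. u0 x + c * theta s M y x)" using up by (auto simp: y_def)
    then show ?thesis using Lp_add[OF p u0 Lp_cmult[OF p thL]] by simp
  qed
  have umL: "um \<in> Lp_space d p"
  proof -
    have "um = (\<lambda>x. u0 x - c * theta s M y x)" using um by (auto simp: y_def)
    then show ?thesis using Lp_diff[OF p u0 Lp_cmult[OF p thL]] by simp
  qed
  have h1: "(\<lambda>x. up x - g x) \<in> Lp_space d p" by (rule Lp_diff[OF p upL g])
  have h2: "(\<lambda>x. g x - um x) \<in> Lp_space d p" by (rule Lp_diff[OF p g umL])
  have hL: "(\<lambda>x. (up x - g x) + (g x - um x)) \<in> Lp_space d p" by (rule Lp_add[OF p h1 h2])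
  have "ennreal (c * measure (cube_measure d) Sb powr pinv p) \<le> Lp_norm d p (\<lambda>x. (up x - g x) + (g x - um x))"
  proof (rule norm_lower[OF p hL Sb(1) mSpos])
    show "0 \<le> c" using c by simp
    fix x assume x: "x \<in> Sb"
    have "(up x - g x) + (g x - um x) = 2 * c * theta s M y x" using up um by (simp add: y_def)
    moreover have "2 * c * theta s M y x \<ge> c" using th[OF x] c by simp
    ultimately show "c \<le> \<bar>(up x - g x) + (g x - um x)\<bar>" by simp
  qed
  also have "\<dots> \<le> Lp_norm d p (\<lambda>x. up x - g x) + Lp_norm d p (\<lambda>x. g x - um x)"
    by (rule Lp_tri[OF p h1 h2])
  also have "Lp_norm d p (\<lambda>x. g x - um x) = Lp_norm d p (\<lambda>x. um x - g x)"
    by (rule Lp_norm_sym)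
  finally show ?thesis unfolding mS .
qed

lemma length_samples: "length (samples f u n) = n"
  by (induction n) (simp_all add: Let_def)

lemma samples_cong:
  "(\<forall>x\<in>set (samples f u n). v x = u x) \<Longrightarrow> samples f v n = samples f u n"
proof (induction n)
  case 0 then show ?case by simp
next
  case (Suc n)
  have sub: "set (samples f u n) \<subseteq> set (samples f u (Suc n))" by (auto simp: Let_def)
  then have eq: "samples f v n = samples f u n" using Suc by blast
  have h: "\<forall>x\<in>set (samples f u n). v x = u x" using Suc.prems sub by blast
  have "map v (samples f u n) = map u (samples f u n)" using h by (simp add: map_eq_conv)
  then show ?case using eq by (simp add: Let_def del: map_eq_conv)
qed

lemma omega_bound:
  assumes p: "1 \<le> p" and M: "M = 2 * real L" and s: "1 \<le> s" and sd: "s \<le> d"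
    and u0: "u0 \<in> Lp_space d p" and c: "c > 0" and L: "L \<ge> 1"
    and Aalg: "A \<in> Alg d n U (Lp_space d p)"
    and upU: "\<And>a. a \<in> Jset s L \<Longrightarrow> up a \<in> U" and umU: "\<And>a. a \<in> Jset s L \<Longrightarrow> um a \<in> U"
    and up: "\<And>a x. up a x = u0 x + c * theta s M (yc s d M a) x"
    and um: "\<And>a x. um a x = u0 x - c * theta s M (yc s d M a) x"
  shows "ennreal (c * ((1 / (M * s)) ^ s) powr pinv p * (real (L ^ s) - real n)) \<le>
     (\<Sum>a\<in>Jset s L. Lp_norm d p (\<lambda>x. up a x - A (up a) x) + Lp_norm d p (\<lambda>x. um a x - A (um a) x))"
proof -
  define C where "C = c * ((1 / (M * s)) ^ s) powr pinv p"
  have C0: "C \<ge> 0" using c by (simp add: C_def)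
  obtain f Q where fQ: "\<forall>xs ys. Q xs ys \<in> Lp_space d p"
    "\<forall>u\<in>U. A u = Q (samples f u n) (map u (samples f u n))"
    using Aalg unfolding Alg_def by blast
  define xs0 where "xs0 = samples f u0 n"
  define g where "g = Q xs0 (map u0 xs0)"
  have gL: "g \<in> Lp_space d p" using fQ(1) by (simp add: g_def)
  define J where "J = Jset s L"
  define Bad where "Bad = {a \<in> J. \<exists>x\<in>set xs0. theta s M (yc s d M a) x \<noteq> 0}"
  have Mpos: "M > 0" using M L by simp
  have cB: "card Bad \<le> n" unfolding Bad_def J_def using count_bad[OF Mpos, of s L xs0 d]
    by (simp add: xs0_def length_samples)
  have good: "C \<le> Lp_norm d p (\<lambda>x. up a x - A (up a) x) + Lp_norm d p (\<lambda>x. um a x - A (um a) x)"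
    if a: "a \<in> J - Bad" for a
  proof -
    have z: "theta s M (yc s d M a) x = 0" if "x \<in> set xs0" for x
      using a that by (auto simp: Bad_def)
    have "\<forall>x\<in>set (samples f u0 n). up a x = u0 x" using z up by (simp add: xs0_def)
    then have sp: "samples f (up a) n = xs0" unfolding xs0_def by (rule samples_cong)
    have "\<forall>x\<in>set (samples f u0 n). um a x = u0 x" using z um by (simp add: xs0_def)
    then have sm: "samples f (um a) n = xs0" unfolding xs0_def by (rule samples_cong)
    have Ap: "A (up a) = g"
    proof -
      have "A (up a) = Q xs0 (map (up a) xs0)" using fQ(2) upU a sp unfolding J_def by auto
      also have "map (up a) xs0 = map u0 xs0" using z up by (auto intro!: map_cong)
      finally show ?thesis by (simp add: g_def)
    qed
    have Am: "A (um a) = g"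
    proof -
      have "A (um a) = Q xs0 (map (um a) xs0)" using fQ(2) umU a sm unfolding J_def by auto
      also have "map (um a) xs0 = map u0 xs0" using z um by (auto intro!: map_cong)
      finally show ?thesis by (simp add: g_def)
    qed
    have aJ: "a \<in> Jset s L" using a by (simp add: J_def)
    show ?thesis unfolding Ap Am C_def
      by (rule pair_bound[OF p M aJ s sd u0 gL c up um])
  qed
  have fJ: "finite J" by (simp add: J_def finite_Jset)
  have "(\<Sum>a\<in>J - Bad. ennreal C) \<le> (\<Sum>a\<in>J - Bad. Lp_norm d p (\<lambda>x. up a x - A (up a) x) + Lp_norm d p (\<lambda>x. um a x - A (um a) x))"
    using good by (intro sum_mono) auto
  also have "\<dots> \<le> (\<Sum>a\<in>J. Lp_norm d p (\<lambda>x. up a x - A (up a) x) + Lp_norm d p (\<lambda>x. um a x - A (um a) x))"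
    using fJ by (intro sum_mono2) auto
  finally have S: "of_nat (card (J - Bad)) * ennreal C \<le> (\<Sum>a\<in>J. Lp_norm d p (\<lambda>x. up a x - A (up a) x) + Lp_norm d p (\<lambda>x. um a x - A (um a) x))"
    by simp
  have BJ: "Bad \<subseteq> J" by (auto simp: Bad_def)
  have cG: "card (J - Bad) = L ^ s - card Bad" using BJ fJ finite_subset[OF BJ fJ] by (simp add: card_Diff_subset card_Jset J_def)
  have "real (L ^ s) - real n \<le> real (card (J - Bad))"
    using cG cB by linarith
  then have "C * (real (L ^ s) - real n) \<le> C * real (card (J - Bad))" using C0 by (intro mult_left_mono)
  then have "ennreal (C * (real (L ^ s) - real n)) \<le> ennreal (C * real (card (J - Bad)))" by (rule ennreal_leI)
  also have "\<dots> = of_nat (card (J - Bad)) * ennreal C"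
    using C0 by (simp add: ennreal_mult ennreal_of_nat_eq_real_of_nat mult.commute)
  finally show ?thesis using S unfolding C_def J_def by simp
qed

lemma real_final:
  fixes lam \<pi> M N :: real and s m k :: nat
  assumes lam: "lam > 0" and s: "s \<ge> 1" and m: "m \<ge> 1" and pi: "0 \<le> \<pi>" 
    and k1: "m powr (1 / s) \<le> real k" and k2: "real k \<le> 2 * m powr (1 / s)"
    and M_def: "M = 8 * real k" and N_def: "N = real ((4 * k) ^ s)"
  shows "(lam / 2) / ((64 * real s) powr (1 + real s * \<pi>)) * real m powr (- \<pi> - 1 / real s)
         \<le> (lam / (M * s) * ((1 / (M * s)) ^ s) powr \<pi>) * (N - m) / (2 * N)"
proof -
  define e where "e = 1 + real s * \<pi>"
  define r where "r = real m powr (1 / s)"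
  have e1: "e \<ge> 1" using pi s by (simp add: e_def)
  have r1: "r \<ge> 1" using m s by (simp add: r_def ge_one_powr_ge_zero)
  have kpos: "real k > 0" using k1 r1 r_def by linarith
  have Mpos: "M > 0" using kpos by (simp add: M_def)
  have X: "M * s > 0" using Mpos s by simp
  have km: "real k ^ s \<ge> m"
  proof -
    have "real m = r ^ s" using m s by (simp add: r_def powr_realpow[symmetric] powr_powr)
    also have "\<dots> \<le> real k ^ s" using k1 r1 by (intro power_mono) (auto simp: r_def)
    finally show ?thesis .
  qed
  have N4: "N \<ge> 4 * m"
  proof -
    have "N = 4 ^ s * real k ^ s" by (simp add: N_def power_mult_distrib)
    also have "(4::real) ^ 1 \<le> 4 ^ s" by (rule power_increasing[OF s]) simp
    then have "4 ^ s \<ge> (4::real)" by simp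
    then have "4 ^ s * real k ^ s \<ge> 4 * real k ^ s" by (intro mult_right_mono) auto
    finally show ?thesis using km by linarith
  qed
  have Npos: "N > 0" using N4 m by linarith
  have frac: "(N - m) / (2 * N) \<ge> 3/8" using N4 Npos by (simp add: field_simps)
  have C: "lam / (M * s) * ((1 / (M * s)) ^ s) powr \<pi> = lam * (M * s) powr (- e)"
  proof -
    define Y where "Y = M * real s"
    have Y: "Y > 0" using X by (simp add: Y_def)
    have "(1 / Y) ^ s = (1 / Y) powr (real s)" by (rule powr_realpow[symmetric]) (use Y in simp)
    then have "((1 / Y) ^ s) powr \<pi> = (1 / Y) powr (real s * \<pi>)" by (simp only: powr_powr)
    also have "(1 / Y) powr (real s * \<pi>) = Y powr (- (real s * \<pi>))"
      using Y by (simp add: powr_divide powr_minus_divide)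
    finally have a: "((1 / Y) ^ s) powr \<pi> = Y powr (- (real s * \<pi>))" .
    have b: "Y powr (- e) = Y powr (- 1) * Y powr (- (real s * \<pi>))"
    proof -
      have "- e = - 1 + - (real s * \<pi>)" by (simp add: e_def)
      then show ?thesis by (simp only: powr_add)
    qed
    have c: "Y powr (- 1) = 1 / Y" using Y by (simp add: powr_minus_divide)
    show ?thesis unfolding Y_def[symmetric] a b c by simp
  qed
  have Xle: "M * s \<le> (16 * real s) * r"
    using k2 s by (simp add: M_def r_def)
  have "(M * s) powr (- e) \<ge> ((16 * real s) * r) powr (- e)"
    using X Xle e1 by (intro powr_mono2') auto
  also have "((16 * real s) * r) powr (- e) = (16 * real s) powr (- e) * r powr (- e)"
    by (rule powr_mult)
  also have "(16 * real s) powr (- e) = 4 powr e * (64 * real s) powr (- e)"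
  proof -
    have "(64 * real s) powr (- e) = (4 * (16 * real s)) powr (- e)" by simp
    also have "\<dots> = 4 powr (- e) * (16 * real s) powr (- e)" by (rule powr_mult)
    finally have a: "(64 * real s) powr (- e) = 4 powr (- e) * (16 * real s) powr (- e)" .
    have b: "(4::real) powr e * 4 powr (- e) = 1" by (simp add: powr_add[symmetric])
    have "4 powr e * (64 * real s) powr (- e) = 4 powr e * (4 powr (- e) * (16 * real s) powr (- e))"
      by (simp only: a)
    also have "\<dots> = (4 powr e * 4 powr (- e)) * (16 * real s) powr (- e)" by (simp only: mult.assoc)
    also have "\<dots> = (16 * real s) powr (- e)" by (simp only: b mult_1)
    finally show ?thesis by (rule sym)
  qed
  also have "r powr (- e) = real m powr (- \<pi> - 1 / real s)"
  proof -
    have "(1 / real s) * (- e) = - \<pi> - 1 / real s" using s by (simp add: e_def field_simps)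
    then show ?thesis unfolding r_def powr_powr by simp
  qed
  finally have key: "(M * s) powr (- e) \<ge> 4 powr e * (64 * real s) powr (- e) * real m powr (- \<pi> - 1 / real s)" .
  have "(4::real) powr 1 \<le> 4 powr e" by (rule powr_mono[OF e1]) simp
  then have four: "4 powr e \<ge> (4::real)" by simp
  have pos: "(64 * real s) powr (- e) * real m powr (- \<pi> - 1 / real s) \<ge> 0" by simp
  have "(lam / 2) / ((64 * real s) powr e) * real m powr (- \<pi> - 1 / real s)
        = (lam / 2) * ((64 * real s) powr (- e) * real m powr (- \<pi> - 1 / real s))"
    by (simp only: powr_minus divide_inverse mult.assoc)
  also have "\<dots> \<le> (3/8) * lam * (4 * ((64 * real s) powr (- e) * real m powr (- \<pi> - 1 / real s)))"
    using lam pos by (simp add: mult_left_mono)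
  also have "\<dots> \<le> (3/8) * lam * (4 powr e * (64 * real s) powr (- e) * real m powr (- \<pi> - 1 / real s))"
    using lam pos four by (simp add: mult_right_mono mult.assoc)
  also have "\<dots> \<le> (3/8) * lam * (M * s) powr (- e)"
    by (rule mult_left_mono[OF key]) (use lam in simp)
  also have "\<dots> = (lam * (M * s) powr (- e)) * (3/8)" by simp
  also have "\<dots> \<le> (lam * (M * s) powr (- e)) * ((N - m) / (2 * N))"
    by (rule mult_left_mono[OF frac]) (use lam in simp)
  finally have fin: "(lam / 2) / ((64 * real s) powr e) * real m powr (- \<pi> - 1 / real s)
     \<le> (lam * (M * s) powr (- e)) * ((N - m) / (2 * N))" .
  show ?thesis unfolding C e_def[symmetric] using fin by (simp only: times_divide_eq_right)
qed

lemma Ccube_Lp: "u \<in> Ccube d \<Longrightarrow> 1 \<le> p \<Longrightarrow> u \<in> Lp_space d p"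
proof -
  assume u: "u \<in> Ccube d" and p: "1 \<le> p"
  then have cu: "continuous_on (cube d) u" by (simp add: Ccube_def)
  obtain B where "\<And>x. x \<in> cube d \<Longrightarrow> \<bar>u x\<bar> \<le> B" using cont_bounded[OF cu] by blast
  then show ?thesis by (rule Lp_bounded[OF p cont_meas[OF cu]])
qed

lemma enn_sub: "b \<ge> 0 \<Longrightarrow> ennreal (a + b) \<le> ennreal a + ennreal b"
proof (cases "a \<ge> 0")
  case True
  assume "b \<ge> 0" then show ?thesis using True by (simp add: ennreal_plus)
next
  case False
  assume b: "b \<ge> 0"
  have "ennreal (a + b) \<le> ennreal b" using False by (intro ennreal_leI) simp
  also have "\<dots> \<le> ennreal a + ennreal b" by simp
  finally show ?thesis .
qed

lemma mc_bound:
  fixes W :: "'w itself"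
  assumes p: "1 \<le> p" and M: "M = 2 * real L" and s: "1 \<le> s" and sd: "s \<le> d" and L: "L \<ge> 1"
    and u0: "u0 \<in> Lp_space d p" and c: "c > 0" and UC: "U \<subseteq> Ccube d"
    and upU: "\<And>a. a \<in> Jset s L \<Longrightarrow> up a \<in> U" and umU: "\<And>a. a \<in> Jset s L \<Longrightarrow> um a \<in> U"
    and up: "\<And>a x. up a x = u0 x + c * theta s M (yc s d M a) x"
    and um: "\<And>a x. um a x = u0 x - c * theta s M (yc s d M a) x"
    and Nm: "real (L ^ s) \<ge> real m"
    and t: "t \<in> Alg_MC W d p U m"
  shows "ennreal ((c * ((1 / (M * s)) ^ s) powr pinv p) * (real (L ^ s) - real m) / (2 * real (L ^ s)))
     \<le> (case t of (P, A, mm) \<Rightarrow> SUP u\<in>U. \<integral>\<^sup>+ \<omega>. Lp_norm d p (\<lambda>x. u x - A \<omega> u x) \<partial>P)"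
proof -
  obtain P A mm where tt: "t = (P, A, mm)" by (cases t) auto
  have Pp: "prob_space P" and mmM: "mm \<in> measurable P (count_space UNIV)"
    and mmI: "(\<integral>\<^sup>+ \<omega>. of_nat (mm \<omega>) \<partial>P) \<le> of_nat m"
    and Am: "\<And>u. u \<in> U \<Longrightarrow> (\<lambda>\<omega>. A \<omega> u) \<in> measurable P (Lp_borel d p)"
    and Aa: "\<And>\<omega>. \<omega> \<in> space P \<Longrightarrow> A \<omega> \<in> Alg d (mm \<omega>) U (Lp_space d p)"
    using t unfolding tt Alg_MC_def by auto
  interpret prob_space P by (rule Pp)
  define S where "S = (SUP u\<in>U. \<integral>\<^sup>+ \<omega>. Lp_norm d p (\<lambda>x. u x - A \<omega> u x) \<partial>P)"
  define G where "G u \<omega> = Lp_norm d p (\<lambda>x. u x - A \<omega> u x)" for u \<omega>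
  define C where "C = c * ((1 / (M * s)) ^ s) powr pinv p"
  define N where "N = L ^ s"
  define J where "J = Jset s L"
  have C0: "C \<ge> 0" using c by (simp add: C_def)
  have Gm: "G u \<in> borel_measurable P" if u: "u \<in> U" for u
  proof -
    have uL: "u \<in> Lp_space d p" using Ccube_Lp[of u d p] UC u p by blast
    show ?thesis unfolding G_def
      by (rule measurable_compose[OF Am[OF u] norm_meas[OF p uL]])
  qed
  have GS: "(\<integral>\<^sup>+ \<omega>. G u \<omega> \<partial>P) \<le> S" if u: "u \<in> U" for u
    unfolding S_def G_def using u by (rule SUP_upper)
  have E1: "ennreal (C * (real N - real (mm \<omega>))) \<le> (\<Sum>a\<in>J. G (up a) \<omega> + G (um a) \<omega>)"
    if w: "\<omega> \<in> space P" for \<omega>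
    unfolding C_def N_def J_def G_def
    by (rule omega_bound[OF p M s sd u0 c L Aa[OF w] upU umU up um])
  have mmF: "(\<lambda>\<omega>. f (mm \<omega>)) \<in> borel_measurable P" for f :: "nat \<Rightarrow> ennreal"
    by (rule measurable_compose[OF mmM]) simp
  define X where "X \<omega> = ennreal (C * (real N - real (mm \<omega>)))" for \<omega>
  define Y where "Y \<omega> = ennreal C * of_nat (mm \<omega>)" for \<omega>
  have Xm: "X \<in> borel_measurable P" unfolding X_def by (rule mmF)
  have Ym: "Y \<in> borel_measurable P" unfolding Y_def by (rule mmF)
  have "ennreal (C * real N) = (\<integral>\<^sup>+ \<omega>. ennreal (C * real N) \<partial>P)"
    by (simp add: emeasure_space_1)
  also have "\<dots> \<le> (\<integral>\<^sup>+ \<omega>. X \<omega> + Y \<omega> \<partial>P)"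
  proof (rule nn_integral_mono)
    fix \<omega>
    have "ennreal (C * real N) = ennreal (C * (real N - real (mm \<omega>)) + C * real (mm \<omega>))"
      by (simp add: algebra_simps)
    also have "\<dots> \<le> X \<omega> + ennreal (C * real (mm \<omega>))"
      unfolding X_def by (rule enn_sub) (use C0 in simp)
    also have "ennreal (C * real (mm \<omega>)) = Y \<omega>"
      using C0 by (simp add: Y_def ennreal_mult ennreal_of_nat_eq_real_of_nat)
    finally show "ennreal (C * real N) \<le> X \<omega> + Y \<omega>" .
  qed
  also have "\<dots> = (\<integral>\<^sup>+ \<omega>. X \<omega> \<partial>P) + (\<integral>\<^sup>+ \<omega>. Y \<omega> \<partial>P)"
    by (rule nn_integral_add[OF Xm Ym])
  also have "(\<integral>\<^sup>+ \<omega>. Y \<omega> \<partial>P) = ennreal C * (\<integral>\<^sup>+ \<omega>. of_nat (mm \<omega>) \<partial>P)"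
    unfolding Y_def by (rule nn_integral_cmult[OF mmF])
  also have "\<dots> \<le> ennreal C * of_nat m" by (rule mult_left_mono[OF mmI]) simp
  finally have E3a: "ennreal (C * real N) \<le> (\<integral>\<^sup>+ \<omega>. X \<omega> \<partial>P) + ennreal C * of_nat m"
    by (simp add: add_left_mono)
  have Nm': "real N - real m \<ge> 0" using Nm by (simp add: N_def)
  have "ennreal (C * real N) = ennreal (C * (real N - real m) + C * real m)"
    by (simp add: algebra_simps)
  also have "\<dots> = ennreal (C * (real N - real m)) + ennreal (C * real m)"
    by (rule ennreal_plus) (use C0 Nm' in simp_all)
  also have "ennreal (C * real m) = ennreal C * of_nat m"
    using C0 by (simp add: ennreal_mult ennreal_of_nat_eq_real_of_nat)
  finally have "ennreal (C * real N) = ennreal (C * (real N - real m)) + ennreal C * of_nat m" .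
  then have "ennreal C * of_nat m + ennreal (C * (real N - real m)) \<le> ennreal C * of_nat m + (\<integral>\<^sup>+ \<omega>. X \<omega> \<partial>P)"
    using E3a by (simp add: add.commute)
  then have E3: "ennreal (C * (real N - real m)) \<le> (\<integral>\<^sup>+ \<omega>. X \<omega> \<partial>P)"
    by (simp add: ennreal_add_left_cancel_le ennreal_mult_eq_top_iff)
  also have "\<dots> \<le> (\<integral>\<^sup>+ \<omega>. (\<Sum>a\<in>J. G (up a) \<omega> + G (um a) \<omega>) \<partial>P)"
    by (rule nn_integral_mono) (use E1 in \<open>simp add: X_def\<close>)
  also have "\<dots> = (\<Sum>a\<in>J. (\<integral>\<^sup>+ \<omega>. G (up a) \<omega> \<partial>P) + (\<integral>\<^sup>+ \<omega>. G (um a) \<omega> \<partial>P))"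
  proof -
    have "(\<integral>\<^sup>+ \<omega>. (\<Sum>a\<in>J. G (up a) \<omega> + G (um a) \<omega>) \<partial>P) = (\<Sum>a\<in>J. (\<integral>\<^sup>+ \<omega>. G (up a) \<omega> + G (um a) \<omega> \<partial>P))"
      by (rule nn_integral_sum) (use Gm upU umU J_def in \<open>auto\<close>)
    also have "\<dots> = (\<Sum>a\<in>J. (\<integral>\<^sup>+ \<omega>. G (up a) \<omega> \<partial>P) + (\<integral>\<^sup>+ \<omega>. G (um a) \<omega> \<partial>P))"
      by (rule sum.cong[OF refl], rule nn_integral_add) (use Gm upU umU J_def in auto)
    finally show ?thesis .
  qed
  also have "\<dots> \<le> (\<Sum>a\<in>J. S + S)"
    by (rule sum_mono, rule add_mono) (use GS upU umU J_def in auto)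
  also have "\<dots> = ennreal (2 * real N) * S"
  proof -
    have "(\<Sum>a\<in>J. S + S) = of_nat N * (S + S)" by (simp add: J_def N_def card_Jset)
    also have "\<dots> = ennreal (real N) * (2 * S)" by (simp add: ennreal_of_nat_eq_real_of_nat mult_2)
    also have "\<dots> = ennreal (2 * real N) * S" by (simp add: ennreal_mult mult.assoc mult.commute mult.left_commute)
    finally show ?thesis .
  qed
  finally have fin: "ennreal (C * (real N - real m)) \<le> ennreal (2 * real N) * S" .
  have Npos: "real N > 0" using L by (simp add: N_def)
  have "ennreal (C * (real N - real m) / (2 * real N)) = ennreal (1 / (2 * real N)) * ennreal (C * (real N - real m))"
    using C0 Nm Npos by (simp add: ennreal_mult[symmetric] N_def)
  also have "\<dots> \<le> ennreal (1 / (2 * real N)) * (ennreal (2 * real N) * S)"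
    by (rule mult_left_mono[OF fin]) simp
  also have "\<dots> = (ennreal (1 / (2 * real N)) * ennreal (2 * real N)) * S" by (simp add: mult.assoc)
  also have "ennreal (1 / (2 * real N)) * ennreal (2 * real N) = 1"
    using Npos by (simp add: ennreal_mult[symmetric])
  finally show ?thesis unfolding tt S_def C_def N_def by simp
qed

lemma pinv_nonneg: "1 \<le> p \<Longrightarrow> 0 \<le> pinv p"
  by (cases p) (auto simp: pinv_def)

theorem theorem2p6:
  fixes d m s :: nat and U :: "((nat \<Rightarrow> real) \<Rightarrow> real) set"
    and u0 :: "(nat \<Rightarrow> real) \<Rightarrow> real" and lam :: real and p :: ereal
  defines "M \<equiv> real_of_int (8 * \<lceil>real m powr (1 / real s)\<rceil>)"
  assumes "1 \<le> s" and "s \<le> d" and "1 \<le> m"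
    and "U \<subseteq> Ccube d"
    and "lam > 0" and "u0 \<in> Ccube d"
    and "\<forall>\<nu>\<in>{-1, 1::real}. \<forall>y\<in>cube d.
           (\<lambda>x. u0 x + \<nu> * (lam / (M * real s)) * theta s M y x) \<in> U"
    and "1 \<le> p"
  shows "err_MC TYPE('w) d p U m \<ge>
    ennreal ((lam / 2) / ((64 * real s) powr (1 + real s * pinv p))
             * real m powr (- pinv p - 1 / real s))"
proof -
  note s = assms(2) and sd = assms(3) and m = assms(4) and UC = assms(5) and lam = assms(6)
    and u0C = assms(7) and hU = assms(8) and p = assms(9)
  define r where "r = real m powr (1 / real s)"
  have r1: "r \<ge> 1" using m s by (simp add: r_def ge_one_powr_ge_zero)
  define k where "k = nat \<lceil>r\<rceil>"
  have cpos: "\<lceil>r\<rceil> \<ge> 1" using r1 by simp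
  have kr: "real k = real_of_int \<lceil>r\<rceil>" using cpos by (simp add: k_def)
  have k1: "r \<le> real k" using kr by simp
  have k2: "real k \<le> 2 * r" using kr r1 by linarith
  have Mk: "M = 8 * real k" unfolding M_def r_def[symmetric] using kr by simp
  define L where "L = 4 * k"
  have M2L: "M = 2 * real L" using Mk by (simp add: L_def)
  have kge: "k \<ge> 1" using k1 r1 by linarith
  have L1: "L \<ge> 1" using kge by (simp add: L_def)
  have Mpos: "M > 0" using M2L L1 by simp
  define c where "c = lam / (M * real s)"
  have c: "c > 0" using lam Mpos s by (simp add: c_def)
  define up where "up a = (\<lambda>x. u0 x + 1 * (lam / (M * real s)) * theta s M (yc s d M a) x)" for a
  define um where "um a = (\<lambda>x. u0 x + (-1) * (lam / (M * real s)) * theta s M (yc s d M a) x)" for a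
  have upU: "up a \<in> U" if a: "a \<in> Jset s L" for a
    using hU yc_cube[OF M2L a sd] unfolding up_def by blast
  have umU: "um a \<in> U" if a: "a \<in> Jset s L" for a
    using hU yc_cube[OF M2L a sd] unfolding um_def by blast
  have upe: "up a x = u0 x + c * theta s M (yc s d M a) x" for a x by (simp add: up_def c_def)
  have ume: "um a x = u0 x - c * theta s M (yc s d M a) x" for a x by (simp add: um_def c_def)
  have u0L: "u0 \<in> Lp_space d p" by (rule Ccube_Lp[OF u0C p])
  have Nge: "real (L ^ s) \<ge> 4 * real m"
  proof -
    have "real m = r ^ s" using m s by (simp add: r_def powr_realpow[symmetric] powr_powr)
    also have "\<dots> \<le> real k ^ s" using k1 r1 by (intro power_mono) auto
    finally have km: "real m \<le> real k ^ s" .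
    have "real (L ^ s) = 4 ^ s * real k ^ s" by (simp add: L_def power_mult_distrib)
    also have "(4::real) ^ 1 \<le> 4 ^ s" by (rule power_increasing[OF s]) simp
    then have "4 ^ s * real k ^ s \<ge> 4 * real k ^ s" by (intro mult_right_mono) auto
    finally show ?thesis using km by linarith
  qed
  then have Nm: "real (L ^ s) \<ge> real m" by linarith
  have RI: "(lam / 2) / ((64 * real s) powr (1 + real s * pinv p)) * real m powr (- pinv p - 1 / real s)
         \<le> (lam / (M * s) * ((1 / (M * s)) ^ s) powr pinv p) * (real ((4 * k) ^ s) - m) / (2 * real ((4 * k) ^ s))"
    by (rule real_final[OF lam s m pinv_nonneg[OF p] k1[unfolded r_def] k2[unfolded r_def] Mk refl])
  show ?thesis unfolding err_MC_def
  proof (rule INF_greatest)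
    fix t assume t: "t \<in> Alg_MC TYPE('w) d p U m"
    have "ennreal ((lam / 2) / ((64 * real s) powr (1 + real s * pinv p)) * real m powr (- pinv p - 1 / real s))
       \<le> ennreal ((c * ((1 / (M * s)) ^ s) powr pinv p) * (real (L ^ s) - real m) / (2 * real (L ^ s)))"
      using RI by (intro ennreal_leI) (simp add: c_def L_def)
    also have "\<dots> \<le> (case t of (P, A, mm) \<Rightarrow> SUP u\<in>U. \<integral>\<^sup>+ \<omega>. Lp_norm d p (\<lambda>x. u x - A \<omega> u x) \<partial>P)"
      by (rule mc_bound[OF p M2L s sd L1 u0L c UC upU umU upe ume Nm t])
    finally show "ennreal ((lam / 2) / ((64 * real s) powr (1 + real s * pinv p)) * real m powr (- pinv p - 1 / real s))
       \<le> (case t of (P, A, mm) \<Rightarrow> SUP u\<in>U. \<integral>\<^sup>+ \<omega>. Lp_norm d p (\<lambda>x. u x - A \<omega> u x) \<partial>P)" .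
  qed
qed


end
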